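(* Let $s=a_1\cdots a_n$ be a permutation of $[n]$ in one-line form with $s\neq 12\cdots n$, write $\bar s_0=0$ and $\bar s_r=a_r$ for $1\le r\le n$, and let $\bar s=(\bar s_0,\bar s_1,\ldots,\bar s_n)$ as an $(n+1)$-cycle on $[n]^*=\{0,1,\ldots,n\}$. Let $\pi$ be the permutation of $[n]^*$ such that the plane permutation $(\bar s,\pi)$ has diagonal $\bar s\circ\pi^{-1}=p_t^{-1}$, where $p_t=(n,n-1,\ldots,1,0)$ (equivalently $\pi=p_t\bar s$). Then there exist indices $0\le i-1<j<k-1\le l\le n$ such that $$\pi(\bar s_{i-1})=\bar s_{k-1},\qquad \pi(\bar s_l)=\bar s_j.$$
   Context: Permutations are multiplied as composition of maps, $(\sigma\tau)(x)=\sigma(\tau(x))$. A plane permutation on a finite set is a pair $(s,\pi)$ with $s$ a cycle through all elements (written with a fixed starting element) and $\pi$ any permutation; its diagonal is $s\circ\pi^{-1}$. Note $p_t^{-1}=(0,1,2,\ldots,n)$. *)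

theory Defs
  imports "HOL-Combinatorics.Cycles"
begin

(* The cycle (c_0, c_1, ..., c_m) as a permutation: c_r maps to c_{r+1}, c_m to c_0;
   this is cycle_of_list from HOL-Combinatorics (map (cycle_of_list cs) cs = rotate1 cs). *)

definition p_t :: "nat \<Rightarrow> nat \<Rightarrow> nat" where
  "p_t n = cycle_of_list (rev [0..<n+1])"

end

theory Submission
  imports Defs
begin

lemma cyc_nth:
  assumes "distinct cs" "r < length cs"
  shows "cycle_of_list cs (cs ! r) = cs ! ((Suc r) mod length cs)"
proof -
  have "map (cycle_of_list cs) cs = rotate 1 cs"
    using cyclic_rotation[of cs 1] assms by simp
  hence "map (cycle_of_list cs) cs ! r = rotate 1 cs ! r" by simp
  thus ?thesis using assms by (simp add: nth_rotate1)
qed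

lemma pt_pos: assumes "1 \<le> x" "x \<le> n" shows "p_t n x = x - 1"
proof -
  let ?cs = "rev [0..<n+1]"
  have "?cs ! (n - x) = x" using assms by (simp add: rev_nth del: upt_Suc)
  moreover have "cycle_of_list ?cs (?cs ! (n - x)) = ?cs ! (Suc (n-x) mod (n+1))"
    using cyc_nth[of ?cs "n-x"] assms by simp
  moreover have "Suc (n-x) mod (n+1) = Suc (n - x)" using assms by simp
  moreover have "?cs ! Suc (n - x) = x - 1" using assms by (simp add: rev_nth del: upt_Suc)
  ultimately show ?thesis unfolding p_t_def by simp
qed

lemma pt_zero: "p_t n 0 = n"
proof -
  let ?cs = "rev [0..<n+1]"
  have "?cs ! n = 0" by (simp add: rev_nth del: upt_Suc)
  moreover have "cycle_of_list ?cs (?cs ! n) = ?cs ! (Suc n mod (n+1))"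
    using cyc_nth[of ?cs "n"] by simp
  moreover have "?cs ! 0 = n" by (simp add: rev_nth del: upt_Suc)
  ultimately show ?thesis unfolding p_t_def by simp
qed

theorem lemma5:
  fixes as :: "nat list" and n :: nat and sb :: "nat list" and \<pi> :: "nat \<Rightarrow> nat"
  assumes "mset as = mset [1..<n+1]"
    and "as \<noteq> [1..<n+1]"
    and "sb = 0 # as"
    and "\<pi> = p_t n \<circ> cycle_of_list sb"
  shows "\<exists>i j k l. 1 \<le> i \<and> 1 \<le> k \<and> i - 1 < j \<and> j < k - 1 \<and> k - 1 \<le> l \<and> l \<le> n
           \<and> \<pi> (sb ! (i - 1)) = sb ! (k - 1) \<and> \<pi> (sb ! l) = sb ! j"
proof -
  have len: "length sb = n + 1" using assms(1,3) by (metis length_Cons length_upt mset_eq_length diff_add_inverse2 add.commute Suc_eq_plus1)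
  have setas: "set as = {1..n}" using assms(1) by (metis atLeastLessThanSuc_atLeastAtMost Suc_eq_plus1 set_mset_mset set_upt)
  have set: "set sb = {0..n}" using setas assms(3) by auto
  have dist: "distinct sb" using assms(1,3) setas
    by (metis distinct.simps(2) distinct_upt mset_eq_imp_distinct_iff atLeastAtMost_iff not_one_le_zero)
  have sb0: "sb ! 0 = 0" using assms(3) by simp
  have rng: "\<And>r. r \<le> n \<Longrightarrow> sb ! r \<le> n" using set len
    by (metis atLeastAtMost_iff le_imp_less_Suc nth_mem Suc_eq_plus1)
  have inj: "\<And>r q. r \<le> n \<Longrightarrow> q \<le> n \<Longrightarrow> sb ! r = sb ! q \<Longrightarrow> r = q"
    using dist len by (simp add: nth_eq_iff_index_eq)
  have ex: "\<And>y. y \<le> n \<Longrightarrow> \<exists>q\<le>n. sb ! q = y"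
  proof -
    fix y assume "y \<le> n"
    hence "y \<in> set sb" using set by auto
    then obtain q where "q < length sb" "sb ! q = y" by (metis in_set_conv_nth)
    thus "\<exists>q\<le>n. sb ! q = y" using len less_Suc_eq_le by auto
  qed
  have pistep: "\<And>r. r < n \<Longrightarrow> \<pi> (sb ! r) = sb ! (r+1) - 1"
  proof -
    fix r assume r: "r < n"
    have c: "cycle_of_list sb (sb ! r) = sb ! (r+1)" using cyc_nth[OF dist, of r] len r by simp
    have "sb ! (r+1) \<noteq> 0" using inj[of "r+1" 0] sb0 r by auto
    moreover have "sb ! (r+1) \<le> n" using rng r by simp
    ultimately show "\<pi> (sb ! r) = sb ! (r+1) - 1" using c pt_pos assms(4) by simp
  qed
  have pin: "\<pi> (sb ! n) = n"
  proof -
    have "cycle_of_list sb (sb ! n) = sb ! 0" using cyc_nth[OF dist, of n] len by simp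
    thus ?thesis using sb0 pt_zero assms(4) by simp
  qed
  define P where "P = (\<lambda>r. r < n \<and> sb ! (r+1) \<noteq> sb ! r + 1)"
  have exP: "\<exists>r. P r"
  proof (rule ccontr)
    assume "\<not> (\<exists>r. P r)"
    hence st: "\<And>r. r < n \<Longrightarrow> sb ! (r+1) = sb ! r + 1" unfolding P_def by blast
    have "\<And>r. r \<le> n \<Longrightarrow> sb ! r = r"
    proof -
      fix r show "r \<le> n \<Longrightarrow> sb ! r = r"
        by (induction r) (auto simp: sb0 st[simplified])
    qed
    hence H: "\<And>i. i < n \<Longrightarrow> as ! i = Suc i" using assms(3)
      by (metis Suc_leI nth_Cons_Suc)
    have "as = [1..<n+1]" using assms(3) len
      by (intro nth_equalityI) (auto simp: H simp del: upt_Suc)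
    thus False using assms(2) by simp
  qed
  define m where "m = (LEAST r. P r)"
  have Pm: "P m" unfolding m_def using exP by (metis LeastI)
  have mn: "m < n" using Pm P_def by simp
  have below: "\<And>r. r \<le> m \<Longrightarrow> sb ! r = r"
  proof -
    fix r show "r \<le> m \<Longrightarrow> sb ! r = r"
    proof (induction r)
      case 0 then show ?case using sb0 by simp
    next
      case (Suc r)
      have "\<not> P r" using Suc.prems unfolding m_def by (metis Suc_le_lessD not_less_Least)
      then show ?case using Suc mn unfolding P_def by auto
    qed
  qed
  define v where "v = sb ! (m+1)"
  have vle: "v \<le> n" using rng mn v_def by simp
  have vgt: "v \<ge> m + 2"
  proof (rule ccontr)
    assume "\<not> v \<ge> m+2"
    hence "v \<le> m + 1" by simp
    moreover have "v \<noteq> m + 1" using Pm below[of m] unfolding P_def v_def by simp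
    ultimately have "v \<le> m" by simp
    hence "sb ! v = v" using below by simp
    hence "v = m + 1" using inj[of v "m+1"] v_def mn \<open>v \<le> m\<close> by simp
    thus False using \<open>v \<le> m\<close> by simp
  qed
  obtain k' where k'n: "k' \<le> n" and k'v: "sb ! k' = v - 1" using ex[of "v-1"] vle by (meson diff_le_self le_trans)
  have k'gt: "k' \<ge> m + 2"
  proof (rule ccontr)
    assume "\<not> k' \<ge> m+2"
    hence "k' \<le> m + 1" by simp
    moreover have "k' \<noteq> m+1" using k'v v_def vgt by auto
    ultimately have "k' \<le> m" by simp
    hence "sb ! k' = k'" using below by simp
    thus False using k'v vgt \<open>k' \<le> m\<close> by simp
  qed
  define W where "W = (\<lambda>j. sb ! j) ` {m<..<k'}"
  have Wfin: "finite W" unfolding W_def by auto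
  have "m+1 \<in> {m<..<k'}" using k'gt by simp
  hence Wne: "W \<noteq> {}" unfolding W_def by blast
  define M where "M = Max W"
  have MW: "M \<in> W" using Wfin Wne M_def by simp
  then obtain j0 where j0: "m < j0" "j0 < k'" "sb ! j0 = M" unfolding W_def by auto
  have vW: "v \<in> W" unfolding W_def v_def using k'gt by auto
  have vM: "v \<le> M" using vW Wfin M_def by simp
  have Mmax: "\<And>j. m < j \<Longrightarrow> j < k' \<Longrightarrow> sb ! j \<le> M"
    using Wfin M_def unfolding W_def by simp
  have Mn: "M \<le> n" using j0 k'n rng[of j0] by simp
  obtain l where l: "k' \<le> l" "l \<le> n" "\<pi> (sb ! l) = M"
  proof (cases "M = n")
    case True then show ?thesis using that[of n] pin k'n by simp
  next
    case False
    then obtain q where q: "q \<le> n" "sb ! q = M + 1" using ex[of "M+1"] Mn by auto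
    have q0: "q \<noteq> 0" using q sb0 by (metis Zero_not_Suc Suc_eq_plus1)
    have "q > k'"
    proof (rule ccontr)
      assume "\<not> q > k'"
      hence "q \<le> k'" by simp
      moreover have "q \<noteq> k'" using q k'v vM by auto
      moreover have "\<not> q \<le> m" using below q vM vgt by fastforce
      ultimately show False using Mmax[of q] q by simp
    qed
    moreover have "\<pi> (sb ! (q - 1)) = M" using pistep[of "q-1"] q q0 by simp
    ultimately show ?thesis using that[of "q-1"] q by simp
  qed
  have first: "\<pi> (sb ! m) = sb ! k'" using pistep[OF mn] k'v v_def by simp
  show ?thesis
    apply (rule exI[of _ "m+1"], rule exI[of _ j0], rule exI[of _ "k'+1"], rule exI[of _ l])
    using j0 l first by simp
qed

end
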